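(* Let $v_2$, $v_3$ and $\delta$ satisfy the standing assumptions described in the context. Then there exist numbers $\ell^*\le 1$ and $\theta^*<2\pi/3$, uniquely determined by the energy (i.e. by $v_2$ and $v_3$), such that every optimal cell $(y_1,\dots,y_6)$ satisfies $|y_i-y_{i-1}|=\ell^*$ and $\theta_i=\theta^*$ for all $i=1,\dots,6$.
   Context: A cell is a $6$-tuple $(y_1,\dots,y_6)\in(\mathbb{R}^3)^6$, indices modulo $6$. Its bonds are the segments $\{y_{i-1},y_i\}$ with lengths $|y_i-y_{i-1}|$, and $\theta_i\in[0,\pi]$ is the bond angle at $y_i$ between the segments $\{y_i,y_{i+1}\}$ and $\{y_i,y_{i-1}\}$. Cell energy: $$E_{\rm cell}(y_1,\dots,y_6)=\tfrac12\sum_{i=1}^6 v_2(|y_i-y_{i-1}|)+\sum_{i=1}^6 v_2(|y_i-y_{i-2}|)+\sum_{i=1}^6 v_3(\theta_i).$$ An optimal cell is a minimizer of $E_{\rm cell}$ on $(\mathbb{R}^3)^6$. Standing assumptions: $v_2:(0,\infty)\to[-1,\infty)$ is continuous, attains its minimum value $-1$ only at $1$, is decreasing on $(0,1)$ and increasing on $[1,\infty)$, and is differentiable on $(5/4,\sqrt3]$ with $v_2'>0$ there; $v_3:[0,\pi]\to[0,\infty)$ is continuous, attains its minimum value $0$ only at $2\pi/3$, and is differentiable at $2\pi/3$. Moreover there is $0<\delta\le 0.2$ with: (i) $v_2(1-\delta)>11+12v_2(\sqrt3)$; (ii) $v_2(1+\delta)>-1+12v_2(\sqrt3)-12v_2(\sqrt3(1-\delta)^2)$;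 (iii) $v_3(\theta)>6+6v_2(\sqrt3)$ whenever $|\theta-2\pi/3|\ge\delta$; (iv) the map $(\ell_1,\ell_2,\theta)\mapsto \frac14 v_2(\ell_1)+\frac14 v_2(\ell_2)+v_2\big((\ell_1^2+\ell_2^2-2\ell_1\ell_2\cos\theta)^{1/2}\big)+v_3(\theta)$ is strictly convex on $\{|\ell_1-1|<\delta,\ |\ell_2-1|<\delta,\ |\theta-2\pi/3|<\delta\}$. *)

theory Defs
  imports "HOL-Analysis.Analysis"
begin

text \<open>A cell is represented by a map y :: nat => real^3; only y 0, ..., y 5 matter,
  indices are read modulo 6 (the paper's y_1..y_6 correspond to y 1..y 5, y 0 = y_6).\<close>

definition cpt :: "(nat \<Rightarrow> real^3) \<Rightarrow> int \<Rightarrow> real^3" where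
  "cpt y i = y (nat (i mod 6))"

definition bond_len :: "(nat \<Rightarrow> real^3) \<Rightarrow> int \<Rightarrow> real" where
  "bond_len y i = dist (cpt y i) (cpt y (i - 1))"

definition snd_len :: "(nat \<Rightarrow> real^3) \<Rightarrow> int \<Rightarrow> real" where
  "snd_len y i = dist (cpt y i) (cpt y (i - 2))"

definition vec_angle :: "real^3 \<Rightarrow> real^3 \<Rightarrow> real" where
  "vec_angle u v = arccos (inner u v / (norm u * norm v))"

definition bond_angle :: "(nat \<Rightarrow> real^3) \<Rightarrow> int \<Rightarrow> real" where
  "bond_angle y i = vec_angle (cpt y (i + 1) - cpt y i) (cpt y (i - 1) - cpt y i)"

text \<open>The energy is only defined when all distances entering v_2 are positive.\<close>
definition admissible_cell :: "(nat \<Rightarrow> real^3) \<Rightarrow> bool" where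
  "admissible_cell y \<longleftrightarrow> (\<forall>i::int. bond_len y i > 0 \<and> snd_len y i > 0)"

definition E_cell :: "(real \<Rightarrow> real) \<Rightarrow> (real \<Rightarrow> real) \<Rightarrow> (nat \<Rightarrow> real^3) \<Rightarrow> real" where
  "E_cell v2 v3 y =
     (1/2) * (\<Sum>i\<in>{1..6::int}. v2 (bond_len y i))
     + (\<Sum>i\<in>{1..6::int}. v2 (snd_len y i))
     + (\<Sum>i\<in>{1..6::int}. v3 (bond_angle y i))"

definition optimal_cell :: "(real \<Rightarrow> real) \<Rightarrow> (real \<Rightarrow> real) \<Rightarrow> (nat \<Rightarrow> real^3) \<Rightarrow> bool" where
  "optimal_cell v2 v3 y \<longleftrightarrow> admissible_cell y \<and>
     (\<forall>z. admissible_cell z \<longrightarrow> E_cell v2 v3 y \<le> E_cell v2 v3 z)"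

definition strict_convex_on :: "'a::real_vector set \<Rightarrow> ('a \<Rightarrow> real) \<Rightarrow> bool" where
  "strict_convex_on S f \<longleftrightarrow> convex S \<and>
     (\<forall>x\<in>S. \<forall>y\<in>S. x \<noteq> y \<longrightarrow> (\<forall>t::real. 0 < t \<and> t < 1 \<longrightarrow>
        f ((1 - t) *\<^sub>R x + t *\<^sub>R y) < (1 - t) * f x + t * f y))"

definition standing_assumptions :: "(real \<Rightarrow> real) \<Rightarrow> (real \<Rightarrow> real) \<Rightarrow> real \<Rightarrow> bool" where
  "standing_assumptions v2 v3 \<delta> \<longleftrightarrow>
     continuous_on {0<..} v2 \<and>
     v2 1 = -1 \<and> (\<forall>r>0. r \<noteq> 1 \<longrightarrow> v2 r > -1) \<and>
     (\<forall>r s. 0 < r \<and> r \<le> s \<and> s < 1 \<longrightarrow> v2 s \<le> v2 r) \<and>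
     (\<forall>r s. 1 \<le> r \<and> r \<le> s \<longrightarrow> v2 r \<le> v2 s) \<and>
     (\<forall>r\<in>{5/4<..sqrt 3}. \<exists>d>0. (v2 has_real_derivative d) (at r)) \<and>
     continuous_on {0..pi} v3 \<and>
     v3 (2*pi/3) = 0 \<and> (\<forall>t\<in>{0..pi}. t \<noteq> 2*pi/3 \<longrightarrow> v3 t > 0) \<and>
     v3 differentiable (at (2*pi/3)) \<and>
     0 < \<delta> \<and> \<delta> \<le> 1/5 \<and>
     v2 (1 - \<delta>) > 11 + 12 * v2 (sqrt 3) \<and>
     v2 (1 + \<delta>) > -1 + 12 * v2 (sqrt 3) - 12 * v2 (sqrt 3 * (1 - \<delta>)^2) \<and>
     (\<forall>t\<in>{0..pi}. \<bar>t - 2*pi/3\<bar> \<ge> \<delta> \<longrightarrow> v3 t > 6 + 6 * v2 (sqrt 3)) \<and>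
     strict_convex_on {(l1, l2, t). \<bar>l1 - 1\<bar> < \<delta> \<and> \<bar>l2 - 1\<bar> < \<delta> \<and> \<bar>t - 2*pi/3\<bar> < \<delta>}
       (\<lambda>(l1, l2, t). (1/4) * v2 l1 + (1/4) * v2 l2
          + v2 (sqrt (l1^2 + l2^2 - 2 * l1 * l2 * cos t)) + v3 t)"

end

theory Submission
  imports Defs
begin
lemma sum6: "(\<Sum>i\<in>{1..6::int}. g i) = g 1 + g 2 + g 3 + g 4 + g 5 + (g 6::real)"
proof -
  have "{1..6::int} = {1,2,3,4,5,6}" by auto
  then show ?thesis by simp
qed

lemma cpt_mod: "i mod 6 = j mod 6 \<Longrightarrow> cpt y i = cpt y j"
  by (simp add: cpt_def)

lemma bond_len_mod: "i mod 6 = j mod 6 \<Longrightarrow> bond_len y i = bond_len y j"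
proof -
  assume h: "i mod 6 = j mod 6"
  have "(i - 1) mod 6 = (j - 1) mod 6"
    using h by (simp_all add: mod_diff_cong)
  then show ?thesis unfolding bond_len_def using h cpt_mod by metis
qed

lemma bond_angle_mod: "i mod 6 = j mod 6 \<Longrightarrow> bond_angle y i = bond_angle y j"
proof -
  assume h: "i mod 6 = j mod 6"
  have "(i + 1) mod 6 = (j + 1) mod 6" "(i - 1) mod 6 = (j - 1) mod 6"
    using h by (simp_all add: mod_add_cong mod_diff_cong)
  then show ?thesis unfolding bond_angle_def using h cpt_mod by metis
qed

lemma snd_len_mod: "i mod 6 = j mod 6 \<Longrightarrow> snd_len y i = snd_len y j"
proof -
  assume h: "i mod 6 = j mod 6"
  have "(i - 2) mod 6 = (j - 2) mod 6"
    using h by (simp_all add: mod_diff_cong)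
  then show ?thesis unfolding snd_len_def using h cpt_mod by metis
qed

lemma rep16: "\<exists>j\<in>{1..6::int}. i mod 6 = j mod 6"
proof -
  have "(i - 1) mod 6 + 1 \<in> {1..6}" by auto
  moreover have "i mod 6 = ((i - 1) mod 6 + 1) mod 6" by presburger
  ultimately show ?thesis by blast
qed

lemma law_cos:
  fixes u w :: "real^3"
  assumes "u \<noteq> 0" "w \<noteq> 0"
  shows "norm (u - w) ^ 2 = norm u ^ 2 + norm w ^ 2 - 2 * norm u * norm w * cos (vec_angle u w)"
proof -
  have nz: "norm u * norm w > 0" using assms by simp
  have "\<bar>inner u w\<bar> \<le> norm u * norm w" by (rule Cauchy_Schwarz_ineq2)
  then have "-1 \<le> inner u w / (norm u * norm w)" "inner u w / (norm u * norm w) \<le> 1"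
    using nz by (auto simp: divide_simps abs_le_iff)
  then have "cos (vec_angle u w) = inner u w / (norm u * norm w)"
    unfolding vec_angle_def by simp
  then have "2 * norm u * norm w * cos (vec_angle u w) = 2 * inner u w" using nz by simp
  moreover have "norm (u - w) ^ 2 = norm u ^ 2 + norm w ^ 2 - 2 * inner u w"
    by (simp add: power2_norm_eq_inner inner_diff inner_commute)
  ultimately show ?thesis by simp
qed

lemma vec_angle_range: "0 \<le> vec_angle u w \<and> vec_angle u w \<le> pi"
proof -
  have "\<bar>inner u w / (norm u * norm w)\<bar> \<le> 1"
  proof (cases "norm u * norm w = 0")
    case True then show ?thesis by auto
  next
    case False
    then have "norm u * norm w > 0" by (simp add: less_le)
    then show ?thesis using Cauchy_Schwarz_ineq2[of u w] by (simp add: abs_div divide_le_eq_1)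
  qed
  then have "-1 \<le> inner u w / (norm u * norm w)" "inner u w / (norm u * norm w) \<le> 1"
    by (auto simp only: abs_le_iff)
  then show ?thesis unfolding vec_angle_def using arccos_lbound arccos_ubound by blast
qed

lemma snd_law:
  assumes "admissible_cell y"
  shows "snd_len y i = sqrt (bond_len y i ^ 2 + bond_len y (i-1) ^ 2
          - 2 * bond_len y i * bond_len y (i-1) * cos (bond_angle y (i-1)))"
proof -
  define u where "u = cpt y i - cpt y (i-1)"
  define w where "w = cpt y (i-2) - cpt y (i-1)"
  have bu: "bond_len y i = norm u" unfolding u_def bond_len_def dist_norm ..
  have bw: "bond_len y (i-1) = norm w" unfolding w_def bond_len_def dist_norm
    by (simp add: norm_minus_commute algebra_simps)
  have ba: "bond_angle y (i-1) = vec_angle u w" unfolding bond_angle_def u_def w_def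
    by (simp add: algebra_simps)
  have sn: "snd_len y i = norm (u - w)" unfolding snd_len_def u_def w_def dist_norm
    by (simp add: algebra_simps)
  have "u \<noteq> 0" "w \<noteq> 0" using assms bu bw unfolding admissible_cell_def
    by (metis less_irrefl norm_zero)+
  then have "norm (u - w) ^ 2 = norm u ^ 2 + norm w ^ 2 - 2 * norm u * norm w * cos (vec_angle u w)"
    by (rule law_cos)
  then show ?thesis using bu bw ba sn by (metis norm_ge_zero real_sqrt_abs abs_of_nonneg real_sqrt_power)
qed

definition FF :: "(real \<Rightarrow> real) \<Rightarrow> (real \<Rightarrow> real) \<Rightarrow> real \<Rightarrow> real \<Rightarrow> real \<Rightarrow> real" where
  "FF v2 v3 l1 l2 t = (1/4) * v2 l1 + (1/4) * v2 l2
          + v2 (sqrt (l1^2 + l2^2 - 2 * l1 * l2 * cos t)) + v3 t"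

lemma E_decomp:
  assumes "admissible_cell y"
  shows "E_cell v2 v3 y = (\<Sum>i\<in>{1..6::int}. FF v2 v3 (bond_len y i) (bond_len y (i-1)) (bond_angle y (i-1)))"
proof -
  have b0: "bond_len y 0 = bond_len y 6" by (rule bond_len_mod) simp
  have a0: "bond_angle y 0 = bond_angle y 6" by (rule bond_angle_mod) simp
  show ?thesis unfolding E_cell_def sum6 FF_def snd_law[OF assms] using b0 a0 by simp
qed

lemma dist_vec3: "dist (vector [a,b,c] :: real^3) (vector [d,e,f]) = sqrt ((a-d)^2 + (b-e)^2 + (c-f)^2)"
  by (simp add: dist_norm norm_eq_sqrt_inner inner_vec_def sum_3 vector_3 power2_eq_square)

definition chair :: "real \<Rightarrow> real \<Rightarrow> nat \<Rightarrow> real^3" where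
  "chair r h k = [vector [r, 0, h], vector [r/2, r * sqrt 3 / 2, -h],
     vector [-r/2, r * sqrt 3 / 2, h], vector [-r, 0, -h],
     vector [-r/2, -r * sqrt 3 / 2, h], vector [r/2, -r * sqrt 3 / 2, -h]] ! (k mod 6)"

lemma chair_cases:
  "i mod 6 = 0 \<or> i mod 6 = 1 \<or> i mod 6 = 2 \<or> i mod 6 = 3 \<or> i mod 6 = 4 \<or> i mod 6 = (5::int)"
  by presburger

lemma sq3: "(a * sqrt 3 / 2)^2 = 3 * a^2 / (4::real)"
  by (simp add: power_mult_distrib power_divide)

lemma sq3b: "(r / 2)\<^sup>2 + (r * sqrt 3 / 2)\<^sup>2 = (r\<^sup>2::real)"
  unfolding sq3 by (simp add: power_divide)

lemma chair_bond:
  shows "bond_len (chair r h) i = sqrt (r^2 + 4 * h^2)"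
proof -
  have e: "bond_len (chair r h) i = bond_len (chair r h) (i mod 6)"
    by (rule bond_len_mod) simp
  show ?thesis unfolding e using chair_cases[of i]
    apply (elim disjE)
    apply (simp_all add: bond_len_def cpt_def chair_def dist_vec3 sq3b)
    done
qed

lemma chair_snd:
  assumes "r \<ge> 0"
  shows "snd_len (chair r h) i = sqrt 3 * r"
proof -
  have e: "snd_len (chair r h) i = snd_len (chair r h) (i mod 6)"
    by (rule snd_len_mod) simp
  have a: "(3 * r / 2)\<^sup>2 + (r * sqrt 3 / 2)\<^sup>2 = (sqrt 3 * r)^2"
    unfolding sq3 by (simp add: power_divide power_mult_distrib)
  have b: "(r * sqrt 3)\<^sup>2 = (sqrt 3 * r)^2"
    by (simp add: algebra_simps)
  have c: "\<bar>sqrt 3 * r\<bar> = sqrt 3 * r" using assms by simp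
  show ?thesis unfolding e using chair_cases[of i]
    apply (elim disjE)
    apply (simp_all add: snd_len_def cpt_def chair_def dist_vec3 a b c)
    done
qed

lemma snd_sq:
  assumes "admissible_cell y"
  shows "snd_len y i ^ 2 = bond_len y i ^ 2 + bond_len y (i-1) ^ 2
          - 2 * bond_len y i * bond_len y (i-1) * cos (bond_angle y (i-1))"
proof -
  define u where "u = cpt y i - cpt y (i-1)"
  define w where "w = cpt y (i-2) - cpt y (i-1)"
  have bu: "bond_len y i = norm u" unfolding u_def bond_len_def dist_norm ..
  have bw: "bond_len y (i-1) = norm w" unfolding w_def bond_len_def dist_norm
    by (simp add: norm_minus_commute algebra_simps)
  have ba: "bond_angle y (i-1) = vec_angle u w" unfolding bond_angle_def u_def w_def
    by (simp add: algebra_simps)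
  have sn: "snd_len y i = norm (u - w)" unfolding snd_len_def u_def w_def dist_norm
    by (simp add: algebra_simps)
  have "u \<noteq> 0" "w \<noteq> 0" using assms bu bw unfolding admissible_cell_def
    by (metis less_irrefl norm_zero)+
  then have "norm (u - w) ^ 2 = norm u ^ 2 + norm w ^ 2 - 2 * norm u * norm w * cos (vec_angle u w)"
    by (rule law_cos)
  then show ?thesis using bu bw ba sn by simp
qed

lemma bond_angle_range: "0 \<le> bond_angle y i \<and> bond_angle y i \<le> pi"
  unfolding bond_angle_def by (rule vec_angle_range)

lemma chair_exists:
  assumes l: "l > 0" and t: "0 < \<theta>" "\<theta> \<le> 2*pi/3"
  shows "\<exists>y. admissible_cell y \<and> (\<forall>i. bond_len y i = l) \<and> (\<forall>i. bond_angle y i = \<theta>)"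
proof -
  have c1: "cos \<theta> < 1"
    using cos_monotone_0_pi[of 0 \<theta>] t pi_gt3 by simp
  have c2: "cos \<theta> \<ge> -1/2"
    using cos_monotone_0_pi_le[of \<theta> "2*pi/3"] t cos_120 by simp
  define r where "r = sqrt (2 * l^2 * (1 - cos \<theta>) / 3)"
  have r2: "r^2 = 2 * l^2 * (1 - cos \<theta>) / 3" unfolding r_def using c1 by simp
  have rpos: "r > 0" unfolding r_def using c1 l by simp
  have rl0: "0 \<le> l^2 * (1 + 2 * cos \<theta>)" using c2 by (intro mult_nonneg_nonneg) auto
  have rl: "r^2 \<le> l^2" unfolding r2 using rl0 by (simp add: field_simps algebra_simps)
  define h where "h = sqrt (l^2 - r^2) / 2"
  have h2: "4 * h^2 = l^2 - r^2" unfolding h_def using rl by (simp add: power_divide)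
  define y where "y = chair r h"
  have b: "bond_len y i = l" for i unfolding y_def chair_bond h2 using l by simp
  have s: "snd_len y i = sqrt 3 * r" for i unfolding y_def using chair_snd rpos by simp
  have adm: "admissible_cell y" unfolding admissible_cell_def using b s rpos l by simp
  have a: "bond_angle y i = \<theta>" for i
  proof -
    have "snd_len y (i+1) ^ 2 = bond_len y (i+1) ^ 2 + bond_len y (i+1-1) ^ 2
          - 2 * bond_len y (i+1) * bond_len y (i+1-1) * cos (bond_angle y (i+1-1))"
      by (rule snd_sq[OF adm])
    then have "3 * r^2 = 2 * l^2 - 2 * l^2 * cos (bond_angle y i)"
      unfolding b s by (simp add: power_mult_distrib power2_eq_square[symmetric])
    then have "cos (bond_angle y i) = cos \<theta>" unfolding r2 using l
      by (simp add: field_simps)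
    then have "arccos (cos (bond_angle y i)) = arccos (cos \<theta>)" by simp
    moreover have "arccos (cos (bond_angle y i)) = bond_angle y i"
      using arccos_cos bond_angle_range by blast
    moreover have "arccos (cos \<theta>) = \<theta>"
      using arccos_cos t pi_gt3 by simp
    ultimately show ?thesis by simp
  qed
  show ?thesis using adm a b by blast
qed

lemma strict_imp_convex: "strict_convex_on D F \<Longrightarrow> convex_on D F"
  unfolding strict_convex_on_def convex_on_def
proof (intro conjI ballI allI impI; (elim conjE)?)
  fix x y and u v :: real
  assume c: "convex D" and sc: "\<forall>x\<in>D. \<forall>y\<in>D. x \<noteq> y \<longrightarrow> (\<forall>t. 0 < t \<and> t < 1 \<longrightarrow>
        F ((1 - t) *\<^sub>R x + t *\<^sub>R y) < (1 - t) * F x + t * F y)"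
    and xy: "x \<in> D" "y \<in> D" and uv: "0 \<le> u" "0 \<le> v" "u + v = 1"
  show "F (u *\<^sub>R x + v *\<^sub>R y) \<le> u * F x + v * F y"
  proof (cases "x = y \<or> v = 0 \<or> u = 0")
    case True
    then show ?thesis
    proof (elim disjE)
      assume "x = y" then show ?thesis using uv by (simp add: scaleR_left_distrib[symmetric] distrib_right[symmetric])
    next
      assume "v = 0" then show ?thesis using uv by simp
    next
      assume "u = 0" then show ?thesis using uv by simp
    qed
  next
    case False
    then have "0 < v" "v < 1" "u = 1 - v" using uv by auto
    then show ?thesis using sc xy False by (metis less_imp_le)
  qed
qed (simp)

lemma strict_jensen:
  fixes F :: "'a::real_vector \<Rightarrow> real"
  assumes sc: "strict_convex_on D F" and fin: "finite S" and pD: "\<And>i. i \<in> S \<Longrightarrow> p i \<in> D"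
    and jk: "j \<in> S" "k \<in> S" "p j \<noteq> p k"
  shows "F (\<Sum>i\<in>S. (1 / real (card S)) *\<^sub>R p i) < (\<Sum>i\<in>S. (1 / real (card S)) * F (p i))"
proof -
  define n where "n = real (card S)"
  define m where "m = (\<Sum>i\<in>S. (1 / n) *\<^sub>R p i)"
  have cv: "convex_on D F" using sc by (rule strict_imp_convex)
  have cD: "convex D" using sc unfolding strict_convex_on_def by blast
  have "j \<noteq> k" using jk by auto
  then have "{j,k} \<subseteq> S" "card {j,k} = 2" using jk by auto
  then have n2: "n \<ge> 2" unfolding n_def using card_mono[OF fin] by (metis of_nat_le_iff of_nat_numeral)
  have "\<exists>j0\<in>S. p j0 \<noteq> m" using jk by metis
  then obtain j0 where j0: "j0 \<in> S" "p j0 \<noteq> m" by blast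
  define S' where "S' = S - {j0}"
  have "card S > 0" using j0 fin card_gt_0_iff by blast
  then have cS': "real (card S') = n - 1" unfolding S'_def n_def using j0 fin
    by (simp add: card_Diff_singleton of_nat_diff)
  have finS': "finite S'" using fin S'_def by simp
  have neS': "S' \<noteq> {}" using cS' n2 by auto
  define q where "q = (\<Sum>i\<in>S'. (1 / (n - 1)) *\<^sub>R p i)"
  have sw: "(\<Sum>i\<in>S'. 1 / (n - 1)) = 1" using cS' n2 by simp
  have qD: "q \<in> D" unfolding q_def
    by (rule convex_sum[OF finS' cD sw]) (use n2 pD S'_def in auto)
  have Fq: "F q \<le> (\<Sum>i\<in>S'. (1 / (n - 1)) * F (p i))" unfolding q_def
    by (rule convex_on_sum[OF finS' neS' cv sw]) (use n2 pD S'_def in auto)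
  have msplit: "m = (1 / n) *\<^sub>R p j0 + (\<Sum>i\<in>S'. (1 / n) *\<^sub>R p i)"
    unfolding m_def S'_def using sum.remove[OF fin j0(1)] by simp
  have "(\<Sum>i\<in>S'. (1 / n) *\<^sub>R p i) = ((n - 1) / n) *\<^sub>R q"
    unfolding q_def scaleR_sum_right using n2 by (intro sum.cong) auto
  then have m2: "m = (1 - 1/n) *\<^sub>R q + (1/n) *\<^sub>R p j0"
    using msplit n2 by (simp add: diff_divide_distrib)
  have qne: "q \<noteq> p j0"
  proof
    assume "q = p j0"
    then have "m = p j0" using m2 by (simp add: scaleR_left_distrib[symmetric])
    then show False using j0 by simp
  qed
  have t01: "0 < 1/n" "1/n < 1" using n2 by auto
  have "F m < (1 - 1/n) * F q + (1/n) * F (p j0)"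
    using sc qD pD[OF j0(1)] qne t01 unfolding strict_convex_on_def m2 by blast
  also have "\<dots> \<le> (1 - 1/n) * (\<Sum>i\<in>S'. (1 / (n - 1)) * F (p i)) + (1/n) * F (p j0)"
    using Fq n2 by (intro add_right_mono mult_left_mono) auto
  also have "(1 - 1/n) * (\<Sum>i\<in>S'. (1 / (n - 1)) * F (p i)) = (\<Sum>i\<in>S'. (1 / n) * F (p i))"
    unfolding sum_distrib_left using n2 by (intro sum.cong) (auto simp: field_simps)
  also have "(\<Sum>i\<in>S'. (1 / n) * F (p i)) + (1/n) * F (p j0) = (\<Sum>i\<in>S. (1 / n) * F (p i))"
    unfolding S'_def using sum.remove[OF fin j0(1), of "\<lambda>i. (1 / n) * F (p i)"] by simp
  finally show ?thesis unfolding m_def n_def .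
qed

lemma cos_bound: assumes "0 < d" "d \<le> 1/5" shows "cos (2*pi/3 - d) \<le> -1/2 + d"
proof -
  have e: "cos (2*pi/3 - d) - cos (2*pi/3) = 2 * sin ((2*pi/3 - d + 2*pi/3) / 2) * sin ((2*pi/3 - (2*pi/3 - d)) / 2)"
    by (rule cos_diff_cos)
  have f1: "sin ((2*pi/3 - (2*pi/3 - d)) / 2) = sin (d/2)" by simp
  have f2: "0 \<le> sin (d/2)" using assms pi_gt3 by (intro sin_ge_zero) auto
  have f3: "sin (d/2) \<le> d/2" using assms by (intro sin_x_le_x) auto
  have f4: "sin ((2*pi/3 - d + 2*pi/3) / 2) \<le> 1" by simp
  have "(2 * sin ((2*pi/3 - d + 2*pi/3) / 2)) * sin ((2*pi/3 - (2*pi/3 - d)) / 2) \<le> (2 * 1) * (d/2)"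
    by (rule mult_mono) (use f1 f2 f3 f4 in auto)
  then show ?thesis using e cos_120 by simp
qed

lemma sqrt3_ge: "sqrt 3 \<ge> (17/10::real)"
  by (rule real_le_rsqrt) (simp add: power2_eq_square)

lemma s_bound:
  fixes d b b' t S :: real
  assumes d: "0 < d" "d \<le> 1/5" and b: "b \<ge> 1 - d" "b' \<ge> 1 - d"
    and t: "2*pi/3 - d \<le> t" "t \<le> pi" and S: "S^2 = b^2 + b'^2 - 2*b*b' * cos t" "S \<ge> 0"
  shows "S \<ge> sqrt 3 * (1 - d)^2"
proof -
  have "cos t \<le> cos (2*pi/3 - d)"
    using t d pi_gt3 by (intro cos_monotone_0_pi_le) auto
  then have ct: "cos t \<le> -1/2 + d" using cos_bound[OF d] by linarith
  have bb: "b * b' \<ge> (1 - d) * (1 - d)" using b d by (intro mult_mono) auto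
  have "S^2 = (b - b')^2 + 2 * (b * b') * (1 - cos t)" unfolding S by (simp add: power2_eq_square algebra_simps)
  also have "\<dots> \<ge> 2 * (b * b') * (1 - cos t)" by simp
  also have "2 * (b * b') * (1 - cos t) \<ge> 2 * ((1 - d) * (1 - d)) * (3/2 - d)"
  proof (rule mult_mono)
    have "0 \<le> (1 - d) * (1 - d)" by simp
    then show "0 \<le> 2 * (b * b')" using bb by linarith
  qed (use bb ct d in auto)
  finally have s1: "S^2 \<ge> 2 * ((1 - d) * (1 - d)) * (3/2 - d)" .
  have "2 * ((1 - d) * (1 - d)) * (3/2 - d) - (sqrt 3 * (1 - d)^2)^2 = (1-d)^2 * (d * (4 - 3 * d))"
    by (simp add: power2_eq_square power_mult_distrib algebra_simps)
  also have "\<dots> \<ge> 0" using d by simp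
  finally have "(sqrt 3 * (1 - d)^2)^2 \<le> S^2" using s1 by linarith
  then show ?thesis using S(2) by (rule power2_le_imp_le)
qed

lemma c_ge1: assumes "0 < d" "d \<le> 1/5" shows "sqrt 3 * (1 - d)^2 \<ge> 1"
proof -
  have "(1 - d)^2 \<ge> (4/5)^2" using assms by (intro power_mono) auto
  then have "sqrt 3 * (1 - d)^2 \<ge> 17/10 * (4/5)^2" using sqrt3_ge by (intro mult_mono) auto
  then show ?thesis by (simp add: power2_eq_square)
qed

definition DD :: "real \<Rightarrow> (real \<times> real \<times> real) set" where
  "DD \<delta> = {(l1, l2, t). \<bar>l1 - 1\<bar> < \<delta> \<and> \<bar>l2 - 1\<bar> < \<delta> \<and> \<bar>t - 2*pi/3\<bar> < \<delta>}"

definition GG :: "(real \<Rightarrow> real) \<Rightarrow> (real \<Rightarrow> real) \<Rightarrow> real \<times> real \<times> real \<Rightarrow> real" where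
  "GG v2 v3 = (\<lambda>(l1, l2, t). FF v2 v3 l1 l2 t)"

context
  fixes v2 v3 :: "real \<Rightarrow> real" and \<delta> :: real
  assumes SA: "standing_assumptions v2 v3 \<delta>"
begin

lemma avg6:
  fixes f :: "int \<Rightarrow> real"
  assumes "\<And>i. a < f i" "\<And>i. f i < b"
  shows "a < (f 1 + f 2 + f 3 + f 4 + f 5 + f 6) / 6 \<and> (f 1 + f 2 + f 3 + f 4 + f 5 + f 6) / 6 < b"
  using assms[of 1] assms[of 2] assms[of 3] assms[of 4] assms[of 5] assms[of 6] by (auto simp: field_simps)

lemma v2_1: "v2 1 = -1" using SA unfolding standing_assumptions_def by blast
lemma v2_gt: "r > 0 \<Longrightarrow> r \<noteq> 1 \<Longrightarrow> v2 r > -1" using SA unfolding standing_assumptions_def by blast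
lemma v2_ge: "r > 0 \<Longrightarrow> v2 r \<ge> -1" using v2_1 v2_gt by (cases "r = 1") force+
lemma v2_dec: "0 < r \<Longrightarrow> r \<le> s \<Longrightarrow> s < 1 \<Longrightarrow> v2 s \<le> v2 r"
  using SA unfolding standing_assumptions_def by blast
lemma v2_inc: "1 \<le> r \<Longrightarrow> r \<le> s \<Longrightarrow> v2 r \<le> v2 s"
  using SA unfolding standing_assumptions_def by blast
lemma v2_deriv: "5/4 < r \<Longrightarrow> r \<le> sqrt 3 \<Longrightarrow> \<exists>d>0. (v2 has_real_derivative d) (at r)"
  using SA unfolding standing_assumptions_def by auto
lemma v3_0: "v3 (2*pi/3) = 0" using SA unfolding standing_assumptions_def by blast
lemma v3_pos: "0 \<le> t \<Longrightarrow> t \<le> pi \<Longrightarrow> t \<noteq> 2*pi/3 \<Longrightarrow> v3 t > 0"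
  using SA unfolding standing_assumptions_def by auto
lemma v3_ge: "0 \<le> t \<Longrightarrow> t \<le> pi \<Longrightarrow> v3 t \<ge> 0"
  using v3_0 v3_pos by (cases "t = 2*pi/3") force+
lemma v3_diff: "v3 differentiable (at (2*pi/3))" using SA unfolding standing_assumptions_def by blast
lemma dpos: "0 < \<delta>" "\<delta> \<le> 1/5" using SA unfolding standing_assumptions_def by auto
lemma A1: "v2 (1 - \<delta>) > 11 + 12 * v2 (sqrt 3)" using SA unfolding standing_assumptions_def by blast
lemma A2: "v2 (1 + \<delta>) > -1 + 12 * v2 (sqrt 3) - 12 * v2 (sqrt 3 * (1 - \<delta>)^2)"
  using SA unfolding standing_assumptions_def by blast
lemma A3: "0 \<le> t \<Longrightarrow> t \<le> pi \<Longrightarrow> \<bar>t - 2*pi/3\<bar> \<ge> \<delta> \<Longrightarrow> v3 t > 6 + 6 * v2 (sqrt 3)"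
  using SA unfolding standing_assumptions_def by auto
lemma A4: "strict_convex_on (DD \<delta>) (GG v2 v3)"
proof -
  have "strict_convex_on {(l1, l2, t). \<bar>l1 - 1\<bar> < \<delta> \<and> \<bar>l2 - 1\<bar> < \<delta> \<and> \<bar>t - 2*pi/3\<bar> < \<delta>}
       (\<lambda>(l1, l2, t). (1/4) * v2 l1 + (1/4) * v2 l2
          + v2 (sqrt (l1^2 + l2^2 - 2 * l1 * l2 * cos t)) + v3 t)"
    using SA unfolding standing_assumptions_def by blast
  moreover have "(\<lambda>(l1, l2, t). (1/4) * v2 l1 + (1/4) * v2 l2
          + v2 (sqrt (l1^2 + l2^2 - 2 * l1 * l2 * cos t)) + v3 t) = GG v2 v3"
    by (auto simp: fun_eq_iff GG_def FF_def)
  ultimately show ?thesis unfolding DD_def by simp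
qed

lemma chair_energy:
  assumes "l > 0" "0 < \<theta>" "\<theta> \<le> 2*pi/3"
  shows "\<exists>y. admissible_cell y \<and> E_cell v2 v3 y = 6 * FF v2 v3 l l \<theta>"
proof -
  obtain y where y: "admissible_cell y" "\<And>i. bond_len y i = l" "\<And>i. bond_angle y i = \<theta>"
    using chair_exists[OF assms] by blast
  show ?thesis using y by (intro exI[of _ y]) (simp add: E_decomp sum6)
qed

lemma E_upper:
  assumes "optimal_cell v2 v3 y"
  shows "E_cell v2 v3 y \<le> -3 + 6 * v2 (sqrt 3)"
proof -
  obtain z where z: "admissible_cell z" "E_cell v2 v3 z = 6 * FF v2 v3 1 1 (2*pi/3)"
    using chair_energy[of 1 "2*pi/3"] by auto
  have "FF v2 v3 1 1 (2*pi/3) = -1/2 + v2 (sqrt 3)"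
    unfolding FF_def cos_120 v2_1 v3_0 by simp
  then show ?thesis using assms z unfolding optimal_cell_def by auto
qed


lemma basic_lower:
  assumes adm: "admissible_cell y"
  shows "(\<Sum>i\<in>{1..6::int}. v2 (bond_len y i)) \<ge> -6"
    "(\<Sum>i\<in>{1..6::int}. v2 (snd_len y i)) \<ge> -6"
    "(\<Sum>i\<in>{1..6::int}. v3 (bond_angle y i)) \<ge> 0"
proof -
  have "of_nat (card {1..6::int}) * (-1) \<le> (\<Sum>i\<in>{1..6::int}. v2 (bond_len y i))"
    by (rule sum_bounded_below) (use adm v2_ge in \<open>auto simp: admissible_cell_def\<close>)
  then show "(\<Sum>i\<in>{1..6::int}. v2 (bond_len y i)) \<ge> -6" by simp
  have "of_nat (card {1..6::int}) * (-1) \<le> (\<Sum>i\<in>{1..6::int}. v2 (snd_len y i))"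
    by (rule sum_bounded_below) (use adm v2_ge in \<open>auto simp: admissible_cell_def\<close>)
  then show "(\<Sum>i\<in>{1..6::int}. v2 (snd_len y i)) \<ge> -6" by simp
  show "(\<Sum>i\<in>{1..6::int}. v3 (bond_angle y i)) \<ge> 0"
    by (rule sum_nonneg) (use v3_ge bond_angle_range in auto)
qed

lemma sum_one:
  fixes f :: "int \<Rightarrow> real"
  assumes "i \<in> {1..6}" "\<And>j. j \<in> {1..6} \<Longrightarrow> f j \<ge> -1"
  shows "(\<Sum>j\<in>{1..6}. f j) \<ge> f i - 5"
proof -
  have "(\<Sum>j\<in>{1..6}. f j) = f i + (\<Sum>j\<in>{1..6} - {i}. f j)"
    using sum.remove[of "{1..6::int}" i f] assms by simp
  moreover have "of_nat (card ({1..6::int} - {i})) * (-1) \<le> (\<Sum>j\<in>{1..6} - {i}. f j)"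
    by (rule sum_bounded_below) (use assms in auto)
  moreover have "card ({1..6::int} - {i}) = 5" using assms by (simp add: card_Diff_singleton)
  ultimately show ?thesis by simp
qed

lemma angle_bound:
  assumes opt: "optimal_cell v2 v3 y"
  shows "\<bar>bond_angle y i - 2*pi/3\<bar> < \<delta>"
proof (rule ccontr)
  assume c: "\<not> ?thesis"
  obtain j where j: "j \<in> {1..6}" "i mod 6 = j mod 6" using rep16 by blast
  have adm: "admissible_cell y" using opt unfolding optimal_cell_def by blast
  have "bond_angle y i = bond_angle y j" using j bond_angle_mod by blast
  then have "v3 (bond_angle y j) > 6 + 6 * v2 (sqrt 3)" using c A3 bond_angle_range by auto
  moreover have "v3 (bond_angle y j) \<le> (\<Sum>i\<in>{1..6::int}. v3 (bond_angle y i))"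
    by (rule member_le_sum) (use j v3_ge bond_angle_range in auto)
  ultimately show False using basic_lower[OF adm] E_upper[OF opt] unfolding E_cell_def by linarith
qed

lemma len_lower:
  assumes opt: "optimal_cell v2 v3 y"
  shows "bond_len y i > 1 - \<delta>"
proof (rule ccontr)
  assume c: "\<not> ?thesis"
  obtain j where j: "j \<in> {1..6}" "i mod 6 = j mod 6" using rep16 by blast
  have adm: "admissible_cell y" using opt unfolding optimal_cell_def by blast
  have "bond_len y i = bond_len y j" using j bond_len_mod by blast
  then have "v2 (bond_len y j) \<ge> v2 (1 - \<delta>)" using c adm dpos
    by (intro v2_dec) (auto simp: admissible_cell_def)
  moreover have "(\<Sum>i\<in>{1..6::int}. v2 (bond_len y i)) \<ge> v2 (bond_len y j) - 5"
    by (rule sum_one) (use j adm v2_ge in \<open>auto simp: admissible_cell_def\<close>)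
  ultimately show False using A1 basic_lower[OF adm] E_upper[OF opt] unfolding E_cell_def by linarith
qed

lemma snd_lower:
  assumes opt: "optimal_cell v2 v3 y"
  shows "snd_len y j \<ge> sqrt 3 * (1 - \<delta>)^2"
proof -
  have adm: "admissible_cell y" using opt unfolding optimal_cell_def by blast
  show ?thesis
  proof (rule s_bound[OF dpos])
    show "1 - \<delta> \<le> bond_len y j" "1 - \<delta> \<le> bond_len y (j-1)"
      using len_lower[OF opt] by (auto simp: less_imp_le)
    show "2*pi/3 - \<delta> \<le> bond_angle y (j-1)" using angle_bound[OF opt, of "j-1"] by linarith
    show "bond_angle y (j-1) \<le> pi" using bond_angle_range by blast
    show "snd_len y j ^ 2 = bond_len y j ^ 2 + bond_len y (j-1) ^ 2
          - 2 * bond_len y j * bond_len y (j-1) * cos (bond_angle y (j-1))" by (rule snd_sq[OF adm])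
    show "snd_len y j \<ge> 0" unfolding snd_len_def by simp
  qed
qed

lemma len_upper:
  assumes opt: "optimal_cell v2 v3 y"
  shows "bond_len y i < 1 + \<delta>"
proof (rule ccontr)
  assume c: "\<not> ?thesis"
  obtain j where j: "j \<in> {1..6}" "i mod 6 = j mod 6" using rep16 by blast
  have adm: "admissible_cell y" using opt unfolding optimal_cell_def by blast
  have "bond_len y i = bond_len y j" using j bond_len_mod by blast
  then have "v2 (bond_len y j) \<ge> v2 (1 + \<delta>)" using c dpos
    by (intro v2_inc) auto
  moreover have "(\<Sum>i\<in>{1..6::int}. v2 (bond_len y i)) \<ge> v2 (bond_len y j) - 5"
    by (rule sum_one) (use j adm v2_ge in \<open>auto simp: admissible_cell_def\<close>)
  moreover have "of_nat (card {1..6::int}) * v2 (sqrt 3 * (1 - \<delta>)^2) \<le> (\<Sum>i\<in>{1..6::int}. v2 (snd_len y i))"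
    by (rule sum_bounded_below) (use c_ge1[OF dpos] snd_lower[OF opt] v2_inc in blast)
  ultimately show False using A2 basic_lower[OF adm] E_upper[OF opt] unfolding E_cell_def by simp
qed


lemma FF_angle_mono:
  assumes l: "1 - \<delta> < l" and t: "2*pi/3 \<le> t" "t \<le> pi" "t \<noteq> 2*pi/3"
  shows "FF v2 v3 l l (2*pi/3) < FF v2 v3 l l t"
proof -
  have ct: "cos t \<le> -1/2" using cos_monotone_0_pi_le[of "2*pi/3" t] t cos_120 by simp
  have l8: "l > 4/5" using l dpos by simp
  have "1 \<le> 3 * l^2" proof -
    have "(4/5)^2 \<le> l^2" using l8 by (intro power_mono) auto
    then show ?thesis by (simp add: power2_eq_square)
  qed
  then have a: "1 \<le> sqrt (l^2 + l^2 - 2*l*l*cos (2*pi/3))" unfolding cos_120 by (simp add: power2_eq_square)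
  have "l^2 + l^2 - 2*l*l*cos (2*pi/3) \<le> l^2 + l^2 - 2*l*l*cos t"
  proof -
    have "l * l * cos t \<le> l * l * (-1/2)" using ct by (intro mult_left_mono) auto
    then show ?thesis unfolding cos_120 by simp
  qed
  then have "v2 (sqrt (l^2 + l^2 - 2*l*l*cos (2*pi/3))) \<le> v2 (sqrt (l^2 + l^2 - 2*l*l*cos t))"
    using a by (intro v2_inc) auto
  moreover have "v3 t > 0" using v3_pos t pi_gt3 by auto
  ultimately show ?thesis unfolding FF_def v3_0 by simp
qed

lemma opt_const:
  assumes opt: "optimal_cell v2 v3 y"
  shows "\<forall>i\<in>{1..6}. bond_len y i = bond_len y 1 \<and> bond_angle y i = bond_angle y 1"
proof -
  have adm: "admissible_cell y" using opt unfolding optimal_cell_def by blast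
  define p where "p i = (bond_len y i, bond_len y (i-1), bond_angle y (i-1))" for i
  define S where "S = {1..6::int}"
  have pD: "p i \<in> DD \<delta>" for i
    unfolding p_def DD_def using len_lower[OF opt, of i] len_upper[OF opt, of i]
      len_lower[OF opt, of "i-1"] len_upper[OF opt, of "i-1"] angle_bound[OF opt, of "i-1"]
    by (simp add: abs_less_iff)
  have Ey: "E_cell v2 v3 y = (\<Sum>i\<in>S. GG v2 v3 (p i))"
    unfolding E_decomp[OF adm] S_def p_def GG_def by simp
  have b0: "bond_len y 0 = bond_len y 6" by (rule bond_len_mod) simp
  have a0: "bond_angle y 0 = bond_angle y 6" by (rule bond_angle_mod) simp
  have all: "\<forall>j\<in>S. p j = p 1"
  proof (rule ccontr)
    assume "\<not> ?thesis"
    then obtain j where j: "j \<in> S" "p j \<noteq> p 1" by blast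
    have cS: "card S = 6" unfolding S_def by simp
    have "GG v2 v3 (\<Sum>i\<in>S. (1 / real (card S)) *\<^sub>R p i) < (\<Sum>i\<in>S. (1 / real (card S)) * GG v2 v3 (p i))"
      by (rule strict_jensen[OF A4 _ _ j(1) _ j(2)]) (auto simp: S_def pD)
    also have "\<dots> = E_cell v2 v3 y / 6" unfolding Ey cS by (simp add: sum_divide_distrib)
    finally have lt: "GG v2 v3 (\<Sum>i\<in>S. (1/6) *\<^sub>R p i) < E_cell v2 v3 y / 6" unfolding cS by simp
    define lb where "lb = (\<Sum>i\<in>S. bond_len y i) / 6"
    define tb where "tb = (\<Sum>i\<in>S. bond_angle y i) / 6"
    have m: "(\<Sum>i\<in>S. (1/6) *\<^sub>R p i) = (lb, lb, tb)"
      unfolding prod_eq_iff fst_sum snd_sum lb_def tb_def p_def S_def sum6 using b0 a0 by simp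
    have lbb: "1 - \<delta> < lb" "lb < 1 + \<delta>"
      unfolding lb_def S_def sum6 using avg6[of "1 - \<delta>" "bond_len y" "1 + \<delta>"] len_lower[OF opt] len_upper[OF opt] by blast+
    have ab: "2*pi/3 - \<delta> < bond_angle y i" "bond_angle y i < 2*pi/3 + \<delta>" for i
      using angle_bound[OF opt, of i] by (simp_all add: abs_less_iff)
    have tbb: "2*pi/3 - \<delta> < tb" "tb < 2*pi/3 + \<delta>"
      unfolding tb_def S_def sum6 using avg6[of "2*pi/3 - \<delta>" "bond_angle y" "2*pi/3 + \<delta>"] ab by blast+
    define t' where "t' = min tb (2*pi/3)"
    have "FF v2 v3 lb lb t' \<le> FF v2 v3 lb lb tb"
    proof (cases "tb \<le> 2*pi/3")
      case True then show ?thesis unfolding t'_def by simp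
    next
      case False
      then have "FF v2 v3 lb lb (2*pi/3) < FF v2 v3 lb lb tb"
        using tbb dpos pi_gt3 lbb by (intro FF_angle_mono) auto
      then show ?thesis unfolding t'_def using False by simp
    qed
    moreover have "0 < lb" "0 < t'" "t' \<le> 2*pi/3" unfolding t'_def using lbb tbb dpos pi_gt3 by auto
    then obtain z where z: "admissible_cell z" "E_cell v2 v3 z = 6 * FF v2 v3 lb lb t'"
      using chair_energy[of lb t'] by auto
    moreover have "GG v2 v3 (lb, lb, tb) = FF v2 v3 lb lb tb" unfolding GG_def by simp
    moreover have "E_cell v2 v3 y \<le> E_cell v2 v3 z" using opt z(1) unfolding optimal_cell_def by blast
    moreover have "FF v2 v3 lb lb tb < E_cell v2 v3 y / 6" using lt unfolding m GG_def by simp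
    ultimately show False using z(2) by linarith
  qed
  show ?thesis
  proof
    fix i assume i: "i \<in> {1..6::int}"
    have "p i = p 1" using all i unfolding S_def by blast
    then have b: "bond_len y i = bond_len y 1" unfolding p_def by simp
    have "bond_angle y i = bond_angle y 0"
    proof (cases "i = 6")
      case True then show ?thesis using a0 by simp
    next
      case False
      then have "i + 1 \<in> S" using i unfolding S_def by auto
      then have "p (i + 1) = p 1" using all by blast
      then show ?thesis unfolding p_def by simp
    qed
    moreover have "bond_angle y 1 = bond_angle y 0"
    proof -
      have "(2::int) \<in> S" unfolding S_def by simp
      then have "p 2 = p 1" using all by blast
      then show ?thesis unfolding p_def by simp
    qed
    ultimately show "bond_len y i = bond_len y 1 \<and> bond_angle y i = bond_angle y 1" using b by simp
  qed
qed


lemma opt_props: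
  assumes opt: "optimal_cell v2 v3 y"
  shows "E_cell v2 v3 y = 6 * FF v2 v3 (bond_len y 1) (bond_len y 1) (bond_angle y 1)"
    "1 - \<delta> < bond_len y 1" "bond_len y 1 < 1 + \<delta>"
    "2*pi/3 - \<delta> < bond_angle y 1" "bond_angle y 1 < 2*pi/3 + \<delta>"
    "0 \<le> bond_angle y 1" "bond_angle y 1 \<le> pi"
proof -
  have adm: "admissible_cell y" using opt unfolding optimal_cell_def by blast
  have c: "\<forall>i\<in>{1..6}. bond_len y i = bond_len y 1 \<and> bond_angle y i = bond_angle y 1"
    by (rule opt_const[OF opt])
  have b0: "bond_len y 0 = bond_len y 6" by (rule bond_len_mod) simp
  have a0: "bond_angle y 0 = bond_angle y 6" by (rule bond_angle_mod) simp
  have c2: "bond_len y 2 = bond_len y 1" "bond_len y 3 = bond_len y 1" "bond_len y 4 = bond_len y 1"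
     "bond_len y 5 = bond_len y 1" "bond_len y 6 = bond_len y 1"
     "bond_angle y 2 = bond_angle y 1" "bond_angle y 3 = bond_angle y 1" "bond_angle y 4 = bond_angle y 1"
     "bond_angle y 5 = bond_angle y 1" "bond_angle y 6 = bond_angle y 1"
  proof -
    have ck: "bond_len y k = bond_len y 1 \<and> bond_angle y k = bond_angle y 1" if "k \<in> {1..6}" for k
      using c that by blast
    have "bond_len y 2 = bond_len y 1 \<and> bond_angle y 2 = bond_angle y 1" by (rule ck) simp
    moreover have "bond_len y 3 = bond_len y 1 \<and> bond_angle y 3 = bond_angle y 1" by (rule ck) simp
    moreover have "bond_len y 4 = bond_len y 1 \<and> bond_angle y 4 = bond_angle y 1" by (rule ck) simp
    moreover have "bond_len y 5 = bond_len y 1 \<and> bond_angle y 5 = bond_angle y 1" by (rule ck) simp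
    moreover have "bond_len y 6 = bond_len y 1 \<and> bond_angle y 6 = bond_angle y 1" by (rule ck) simp
    ultimately show "bond_len y 2 = bond_len y 1" "bond_len y 3 = bond_len y 1" "bond_len y 4 = bond_len y 1"
     "bond_len y 5 = bond_len y 1" "bond_len y 6 = bond_len y 1"
     "bond_angle y 2 = bond_angle y 1" "bond_angle y 3 = bond_angle y 1" "bond_angle y 4 = bond_angle y 1"
     "bond_angle y 5 = bond_angle y 1" "bond_angle y 6 = bond_angle y 1" by blast+
  qed
  show "E_cell v2 v3 y = 6 * FF v2 v3 (bond_len y 1) (bond_len y 1) (bond_angle y 1)"
    unfolding E_decomp[OF adm] sum6 using b0 a0 c2 by simp
  show "1 - \<delta> < bond_len y 1" "bond_len y 1 < 1 + \<delta>"
    using len_lower[OF opt] len_upper[OF opt] by auto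
  show "2*pi/3 - \<delta> < bond_angle y 1" "bond_angle y 1 < 2*pi/3 + \<delta>"
    using angle_bound[OF opt, of 1] by (simp_all add: abs_less_iff)
  show "0 \<le> bond_angle y 1" "bond_angle y 1 \<le> pi" using bond_angle_range by auto
qed

lemma t_le:
  assumes opt: "optimal_cell v2 v3 y"
  shows "bond_angle y 1 \<le> 2*pi/3"
proof (rule ccontr)
  assume c: "\<not> ?thesis"
  define l where "l = bond_len y 1"
  define t where "t = bond_angle y 1"
  note P = opt_props[OF opt, folded l_def t_def]
  have "FF v2 v3 l l (2*pi/3) < FF v2 v3 l l t"
    using P c dpos by (intro FF_angle_mono) (auto simp: t_def)
  moreover obtain z where z: "admissible_cell z" "E_cell v2 v3 z = 6 * FF v2 v3 l l (2*pi/3)"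
    using chair_energy[of l "2*pi/3"] P dpos by auto
  moreover have "E_cell v2 v3 y \<le> E_cell v2 v3 z" using opt z(1) unfolding optimal_cell_def by blast
  ultimately show False using P(1) by linarith
qed

lemma l_le:
  assumes opt: "optimal_cell v2 v3 y"
  shows "bond_len y 1 \<le> 1"
proof (rule ccontr)
  assume c: "\<not> ?thesis"
  define l where "l = bond_len y 1"
  define t where "t = bond_angle y 1"
  note P = opt_props[OF opt, folded l_def t_def]
  have tl: "t \<le> 2*pi/3" using t_le[OF opt] unfolding t_def .
  have l1: "l > 1" using c unfolding l_def by simp
  have "cos t \<le> cos (pi/3)" using P dpos pi_gt3 by (intro cos_monotone_0_pi_le) auto
  then have ct: "cos t \<le> 1/2" by (simp add: cos_60)
  have q0: "1 \<le> 1 + 1 - 2 * 1 * 1 * cos t" using ct by simp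
  have "(1 + 1 - 2 * 1 * 1 * cos t) * 1 \<le> (1 + 1 - 2 * 1 * 1 * cos t) * (l * l)"
  proof (rule mult_left_mono)
    show "1 \<le> l * l" using mult_mono[of 1 l 1 l] l1 by simp
  qed (use q0 in simp)
  then have q1: "1 + 1 - 2 * 1 * 1 * cos t \<le> l^2 + l^2 - 2 * l * l * cos t"
    by (simp add: power2_eq_square algebra_simps)
  have "v2 (sqrt (1^2 + 1^2 - 2 * 1 * 1 * cos t)) \<le> v2 (sqrt (l^2 + l^2 - 2 * l * l * cos t))"
    using q0 q1 by (intro v2_inc) auto
  moreover have "v2 l > v2 1" using v2_gt[of l] l1 v2_1 by simp
  ultimately have "FF v2 v3 1 1 t < FF v2 v3 l l t" unfolding FF_def by simp
  moreover obtain z where z: "admissible_cell z" "E_cell v2 v3 z = 6 * FF v2 v3 1 1 t"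
    using chair_energy[of 1 t] P tl dpos pi_gt3 by auto
  moreover have "E_cell v2 v3 y \<le> E_cell v2 v3 z" using opt z(1) unfolding optimal_cell_def by blast
  ultimately show False using P(1) by linarith
qed


lemma t_lt:
  assumes opt: "optimal_cell v2 v3 y"
  shows "bond_angle y 1 < 2*pi/3"
proof (rule ccontr)
  assume c: "\<not> ?thesis"
  define l where "l = bond_len y 1"
  define t0 where "t0 = bond_angle y 1"
  note P = opt_props[OF opt, folded l_def t0_def]
  have t0: "t0 = 2*pi/3" using c t_le[OF opt] unfolding t0_def by simp
  have l1: "l \<le> 1" using l_le[OF opt] unfolding l_def .
  have l8: "l > 4/5" using P dpos by simp
  define q where "q t = l^2 + l^2 - 2*l*l*cos t" for t
  have qt0: "q t0 = 3 * l^2" unfolding q_def t0 cos_120 by (simp add: power2_eq_square)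
  have qpos: "q t0 > 0" unfolding qt0 using l8 by simp
  have s0: "sqrt (q t0) = sqrt 3 * l" unfolding qt0 real_sqrt_mult using l8 by simp
  have s0a: "5/4 < sqrt (q t0)"
  proof -
    have "17/10 * (4/5) < sqrt 3 * l" using sqrt3_ge l8 by (intro mult_le_less_imp_less) auto
    then show ?thesis unfolding s0 by simp
  qed
  have s0b: "sqrt (q t0) \<le> sqrt 3" unfolding s0 using l1 by simp
  obtain d where d: "d > 0" "(v2 has_real_derivative d) (at (sqrt (q t0)))"
    using v2_deriv[OF s0a s0b] by blast
  have dq: "(q has_real_derivative (2*l*l * sin t0)) (at t0)"
    unfolding q_def by (auto intro!: derivative_eq_intros)
  have dsq: "(sqrt has_real_derivative (inverse (sqrt (q t0)) / 2)) (at (q t0))"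
    using qpos by (rule DERIV_real_sqrt)
  have d2: "((\<lambda>t. v2 (sqrt (q t))) has_real_derivative d * (inverse (sqrt (q t0)) / 2 * (2*l*l * sin t0))) (at t0)"
    using DERIV_chain2[OF d(2) DERIV_chain2[OF dsq dq]] .
  obtain D3 where D3: "(v3 has_real_derivative D3) (at t0)"
    using v3_diff unfolding t0 using DERIV_deriv_iff_real_differentiable by blast
  have "D3 = 0"
  proof (rule DERIV_local_min[OF D3, of 1])
    show "\<forall>y. \<bar>t0 - y\<bar> < 1 \<longrightarrow> v3 t0 \<le> v3 y"
    proof (intro allI impI)
      fix yy assume "\<bar>t0 - yy\<bar> < 1"
      then have "0 \<le> yy" "yy \<le> pi" using t0 pi_gt3 by auto
      then show "v3 t0 \<le> v3 yy" using v3_ge[of yy] v3_0 unfolding t0 by simp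
    qed
  qed simp
  define h where "h t = 1/4 * v2 l + 1/4 * v2 l + v2 (sqrt (q t)) + v3 t" for t
  have hFF: "h t = FF v2 v3 l l t" for t unfolding h_def FF_def q_def by (simp add: power2_eq_square)
  have dh: "(h has_real_derivative (0 + 0 + d * (inverse (sqrt (q t0)) / 2 * (2*l*l * sin t0)) + D3)) (at t0)"
    unfolding h_def by (intro DERIV_add d2 D3 DERIV_const)
  have "sin t0 > 0" unfolding t0 using pi_gt3 by (intro sin_gt_zero) auto
  then have pos: "0 + 0 + d * (inverse (sqrt (q t0)) / 2 * (2*l*l * sin t0)) + D3 > 0"
    using d(1) qpos l8 \<open>D3 = 0\<close> by simp
  obtain e where e: "e > 0" "\<forall>hh>0. hh < e \<longrightarrow> h (t0 - hh) < h t0"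
    using DERIV_pos_inc_left[OF dh pos] by blast
  define hh where "hh = min (e/2) 1"
  have hh: "hh > 0" "hh < e" "hh \<le> 1" unfolding hh_def using e by auto
  then have "h (t0 - hh) < h t0" using e by blast
  moreover obtain z where z: "admissible_cell z" "E_cell v2 v3 z = 6 * FF v2 v3 l l (t0 - hh)"
    using chair_energy[of l "t0 - hh"] l8 hh t0 pi_gt3 by auto
  moreover have "E_cell v2 v3 y \<le> E_cell v2 v3 z" using opt z(1) unfolding optimal_cell_def by blast
  ultimately show False using P(1) hFF by simp
qed

lemma uniq:
  assumes opt: "optimal_cell v2 v3 y" and opt': "optimal_cell v2 v3 y'"
  shows "bond_len y 1 = bond_len y' 1 \<and> bond_angle y 1 = bond_angle y' 1"
proof (rule ccontr)
  assume c: "\<not> ?thesis"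
  define l where "l = bond_len y 1"
  define t where "t = bond_angle y 1"
  define l' where "l' = bond_len y' 1"
  define t' where "t' = bond_angle y' 1"
  note P = opt_props[OF opt, folded l_def t_def]
  note P' = opt_props[OF opt', folded l'_def t'_def]
  have tl: "t \<le> 2*pi/3" "t' \<le> 2*pi/3" using t_le[OF opt] t_le[OF opt'] unfolding t_def t'_def by auto
  have Eeq: "E_cell v2 v3 y = E_cell v2 v3 y'" using opt opt' unfolding optimal_cell_def by force
  have ne: "(l, l, t) \<noteq> (l', l', t')" using c unfolding l_def l'_def t_def t'_def by auto
  have inD: "(l, l, t) \<in> DD \<delta>" "(l', l', t') \<in> DD \<delta>" unfolding DD_def using P P' by auto
  have "GG v2 v3 ((1 - 1/2) *\<^sub>R (l, l, t) + (1/2) *\<^sub>R (l', l', t')) < (1 - 1/2) * GG v2 v3 (l, l, t) + (1/2) * GG v2 v3 (l', l', t')"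
  proof -
    have sc: "\<forall>x\<in>DD \<delta>. \<forall>y\<in>DD \<delta>. x \<noteq> y \<longrightarrow> (\<forall>t::real. 0 < t \<and> t < 1 \<longrightarrow>
        GG v2 v3 ((1 - t) *\<^sub>R x + t *\<^sub>R y) < (1 - t) * GG v2 v3 x + t * GG v2 v3 y)"
      using A4 unfolding strict_convex_on_def by blast
    show ?thesis by (rule sc[rule_format, OF inD ne]) simp
  qed
  then have lt: "FF v2 v3 ((l + l')/2) ((l + l')/2) ((t + t')/2) < E_cell v2 v3 y / 6"
    using P(1) P'(1) Eeq unfolding GG_def by (simp add: add_divide_distrib)
  obtain z where z: "admissible_cell z" "E_cell v2 v3 z = 6 * FF v2 v3 ((l + l')/2) ((l + l')/2) ((t + t')/2)"
    using chair_energy[of "(l + l')/2" "(t + t')/2"] P P' tl dpos pi_gt3 by auto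
  moreover have "E_cell v2 v3 y \<le> E_cell v2 v3 z" using opt z(1) unfolding optimal_cell_def by blast
  ultimately show False using lt by linarith
qed

end

theorem mainTheorem2:
  fixes v2 v3 :: "real \<Rightarrow> real" and \<delta> :: real
  assumes "standing_assumptions v2 v3 \<delta>"
  shows "\<exists>l_star t_star. l_star \<le> 1 \<and> t_star < 2*pi/3 \<and>
           (\<forall>y. optimal_cell v2 v3 y \<longrightarrow>
              (\<forall>i\<in>{1..6::int}. bond_len y i = l_star \<and> bond_angle y i = t_star))"
proof (cases "\<exists>y0. optimal_cell v2 v3 y0")
  case True
  then obtain y0 where y0: "optimal_cell v2 v3 y0" by blast
  show ?thesis
  proof (intro exI conjI allI impI ballI)
    show "bond_len y0 1 \<le> 1" by (rule l_le[OF assms y0])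
    show "bond_angle y0 1 < 2*pi/3" by (rule t_lt[OF assms y0])
    fix y i assume y: "optimal_cell v2 v3 y" and i: "i \<in> {1..6::int}"
    have "bond_len y i = bond_len y 1 \<and> bond_angle y i = bond_angle y 1"
      using opt_const[OF assms y] i by blast
    then show "bond_len y i = bond_len y0 1" "bond_angle y i = bond_angle y0 1"
      using uniq[OF assms y y0] by auto
  qed
next
  case False
  then show ?thesis by (intro exI[of _ 1] exI[of _ 0]) auto
qed

end
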